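(* Let $\sigma$ be an involutive non-degenerate quiver-theoretic Yang--Baxter map on a nonempty quiver $\mathscr{A}$ over $\Lambda$, and let $E$ be the closure of (the image of) $\mathscr{A}$ under right-lcms in the structure category $\mathscr{C}(\sigma)$. Suppose there is a finite $n$ with $|\mathscr{A}(\lambda,\Lambda)|\le n$ for all $\lambda\in\Lambda$. Then every element of $E$ has length at most $n$. In particular $E\subsetneq\mathscr{C}(\sigma)$.
   Context: Write $\sigma(x,y)=(x\rightharpoonup y,x\leftharpoonup y)$. A quiver-theoretic Yang--Baxter map is a source/target-preserving map $\sigma$ on composable pairs satisfying the braid relation; involutive: $\sigma^2=\mathrm{id}$; non-degenerate: all $x\rightharpoonup\cdot\colon\mathscr{A}(\mathfrak{t}(x),\Lambda)\to\mathscr{A}(\mathfrak{s}(x),\Lambda)$ and $\cdot\leftharpoonup y\colon\mathscr{A}(\Lambda,\mathfrak{s}(y))\to\mathscr{A}(\Lambda,\mathfrak{t}(y))$ bijective. $\mathscr{A}(\lambda,\Lambda)$ is the set of arrows with source $\lambda$. $\mathscr{C}(\sigma)$ is the category presented by generators $\mathscr{A}$ and the length-preserving relations $x|y\sim(x\rightharpoonup y)|(x\leftharpoonup y)$, so the length of an element (length of any representing path) is well defined. *)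

theory Defs
  imports Main
begin

text \<open>Paths are written left to right: x|y is composable iff tgt x = src y.
  A quiver-theoretic set-theoretic map sigma on composable pairs is a function
  sig :: 'a \<times> 'a \<Rightarrow> 'a \<times> 'a, with (x \<rightharpoonup> y) = fst (sig (x,y)) and
  (x \<leftharpoonup> y) = snd (sig (x,y)).\<close>

definition quiver :: "'a set \<Rightarrow> 'v set \<Rightarrow> ('a \<Rightarrow> 'v) \<Rightarrow> ('a \<Rightarrow> 'v) \<Rightarrow> bool" where
  "quiver A Lam src tgt \<longleftrightarrow> (\<forall>x\<in>A. src x \<in> Lam \<and> tgt x \<in> Lam)"

definition composable :: "'a set \<Rightarrow> ('a \<Rightarrow> 'v) \<Rightarrow> ('a \<Rightarrow> 'v) \<Rightarrow> 'a \<Rightarrow> 'a \<Rightarrow> bool" where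
  "composable A src tgt x y \<longleftrightarrow> x \<in> A \<and> y \<in> A \<and> tgt x = src y"

text \<open>The arrows with source lam, i.e. A(lam, Lam).\<close>
definition out_arrows :: "'a set \<Rightarrow> ('a \<Rightarrow> 'v) \<Rightarrow> 'v \<Rightarrow> 'a set" where
  "out_arrows A src lam = {x\<in>A. src x = lam}"

definition in_arrows :: "'a set \<Rightarrow> ('a \<Rightarrow> 'v) \<Rightarrow> 'v \<Rightarrow> 'a set" where
  "in_arrows A tgt lam = {x\<in>A. tgt x = lam}"

text \<open>Braid relation on composable triples x|y|z:
  (sigma x id)(id x sigma)(sigma x id) = (id x sigma)(sigma x id)(id x sigma).\<close>
definition sig12 :: "('a \<times> 'a \<Rightarrow> 'a \<times> 'a) \<Rightarrow> 'a \<times> 'a \<times> 'a \<Rightarrow> 'a \<times> 'a \<times> 'a" where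
  "sig12 sig = (\<lambda>(x,y,z). (fst (sig (x,y)), snd (sig (x,y)), z))"

definition sig23 :: "('a \<times> 'a \<Rightarrow> 'a \<times> 'a) \<Rightarrow> 'a \<times> 'a \<times> 'a \<Rightarrow> 'a \<times> 'a \<times> 'a" where
  "sig23 sig = (\<lambda>(x,y,z). (x, fst (sig (y,z)), snd (sig (y,z))))"

definition qYB_map ::
  "'a set \<Rightarrow> 'v set \<Rightarrow> ('a \<Rightarrow> 'v) \<Rightarrow> ('a \<Rightarrow> 'v) \<Rightarrow> ('a \<times> 'a \<Rightarrow> 'a \<times> 'a) \<Rightarrow> bool" where
  "qYB_map A Lam src tgt sig \<longleftrightarrow>
     quiver A Lam src tgt \<and>
     (\<forall>x y. composable A src tgt x y \<longrightarrow>
        composable A src tgt (fst (sig (x,y))) (snd (sig (x,y))) \<and>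
        src (fst (sig (x,y))) = src x \<and> tgt (snd (sig (x,y))) = tgt y) \<and>
     (\<forall>x y z. composable A src tgt x y \<and> composable A src tgt y z \<longrightarrow>
        sig12 sig (sig23 sig (sig12 sig (x,y,z))) = sig23 sig (sig12 sig (sig23 sig (x,y,z))))"

definition involutive ::
  "'a set \<Rightarrow> ('a \<Rightarrow> 'v) \<Rightarrow> ('a \<Rightarrow> 'v) \<Rightarrow> ('a \<times> 'a \<Rightarrow> 'a \<times> 'a) \<Rightarrow> bool" where
  "involutive A src tgt sig \<longleftrightarrow>
     (\<forall>x y. composable A src tgt x y \<longrightarrow> sig (sig (x,y)) = (x,y))"

definition nondegenerate ::
  "'a set \<Rightarrow> ('a \<Rightarrow> 'v) \<Rightarrow> ('a \<Rightarrow> 'v) \<Rightarrow> ('a \<times> 'a \<Rightarrow> 'a \<times> 'a) \<Rightarrow> bool" where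
  "nondegenerate A src tgt sig \<longleftrightarrow>
     (\<forall>x\<in>A. bij_betw (\<lambda>y. fst (sig (x,y))) (out_arrows A src (tgt x)) (out_arrows A src (src x))) \<and>
     (\<forall>y\<in>A. bij_betw (\<lambda>x. snd (sig (x,y))) (in_arrows A tgt (src y)) (in_arrows A tgt (tgt y)))"

text \<open>Paths: a path is a pair (lam, xs) of a starting vertex and a composable list of arrows
  starting at lam (the empty list gives the identity at lam).\<close>
fun is_path :: "'a set \<Rightarrow> 'v set \<Rightarrow> ('a \<Rightarrow> 'v) \<Rightarrow> ('a \<Rightarrow> 'v) \<Rightarrow> 'v \<Rightarrow> 'a list \<Rightarrow> bool" where
  "is_path A Lam src tgt lam [] \<longleftrightarrow> lam \<in> Lam"
| "is_path A Lam src tgt lam (x # xs) \<longleftrightarrow>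
     x \<in> A \<and> src x = lam \<and> lam \<in> Lam \<and> is_path A Lam src tgt (tgt x) xs"

definition paths :: "'a set \<Rightarrow> 'v set \<Rightarrow> ('a \<Rightarrow> 'v) \<Rightarrow> ('a \<Rightarrow> 'v) \<Rightarrow> ('v \<times> 'a list) set" where
  "paths A Lam src tgt = {(lam, xs). is_path A Lam src tgt lam xs}"

definition ystep ::
  "'a set \<Rightarrow> 'v set \<Rightarrow> ('a \<Rightarrow> 'v) \<Rightarrow> ('a \<Rightarrow> 'v) \<Rightarrow> ('a \<times> 'a \<Rightarrow> 'a \<times> 'a) \<Rightarrow> (('v \<times> 'a list) \<times> ('v \<times> 'a list)) set" where
  "ystep A Lam src tgt sig =
     {((lam, u @ [x, y] @ v), (lam, u @ [fst (sig (x,y)), snd (sig (x,y))] @ v)) | lam u x y v.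
        (lam, u @ [x, y] @ v) \<in> paths A Lam src tgt}"

definition ycong ::
  "'a set \<Rightarrow> 'v set \<Rightarrow> ('a \<Rightarrow> 'v) \<Rightarrow> ('a \<Rightarrow> 'v) \<Rightarrow> ('a \<times> 'a \<Rightarrow> 'a \<times> 'a) \<Rightarrow> (('v \<times> 'a list) \<times> ('v \<times> 'a list)) set" where
  "ycong A Lam src tgt sig = (ystep A Lam src tgt sig \<union> (ystep A Lam src tgt sig)\<inverse>)\<^sup>*"

definition struct_cat ::
  "'a set \<Rightarrow> 'v set \<Rightarrow> ('a \<Rightarrow> 'v) \<Rightarrow> ('a \<Rightarrow> 'v) \<Rightarrow> ('a \<times> 'a \<Rightarrow> 'a \<times> 'a) \<Rightarrow> ('v \<times> 'a list) set set" where
  "struct_cat A Lam src tgt sig = paths A Lam src tgt // ycong A Lam src tgt sig"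

definition gen_elem ::
  "'a set \<Rightarrow> 'v set \<Rightarrow> ('a \<Rightarrow> 'v) \<Rightarrow> ('a \<Rightarrow> 'v) \<Rightarrow> ('a \<times> 'a \<Rightarrow> 'a \<times> 'a) \<Rightarrow> 'a \<Rightarrow> ('v \<times> 'a list) set" where
  "gen_elem A Lam src tgt sig x = ycong A Lam src tgt sig `` {(src x, [x])}"

definition ldiv ::
  "('v \<times> 'a list) set \<Rightarrow> ('v \<times> 'a list) set \<Rightarrow> bool" where
  "ldiv a c \<longleftrightarrow> (\<exists>lam xs ys. (lam, xs) \<in> a \<and> (lam, xs @ ys) \<in> c)"

definition is_right_lcm ::
  "'a set \<Rightarrow> 'v set \<Rightarrow> ('a \<Rightarrow> 'v) \<Rightarrow> ('a \<Rightarrow> 'v) \<Rightarrow> ('a \<times> 'a \<Rightarrow> 'a \<times> 'a) \<Rightarrow>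
   ('v \<times> 'a list) set \<Rightarrow> ('v \<times> 'a list) set \<Rightarrow> ('v \<times> 'a list) set \<Rightarrow> bool" where
  "is_right_lcm A Lam src tgt sig a b c \<longleftrightarrow>
     c \<in> struct_cat A Lam src tgt sig \<and> ldiv a c \<and> ldiv b c \<and>
     (\<forall>d\<in>struct_cat A Lam src tgt sig. ldiv a d \<and> ldiv b d \<longrightarrow> ldiv c d)"

inductive_set lcm_closure ::
  "'a set \<Rightarrow> 'v set \<Rightarrow> ('a \<Rightarrow> 'v) \<Rightarrow> ('a \<Rightarrow> 'v) \<Rightarrow> ('a \<times> 'a \<Rightarrow> 'a \<times> 'a) \<Rightarrow> ('v \<times> 'a list) set set"
  for A Lam src tgt sig where
  gen: "x \<in> A \<Longrightarrow> gen_elem A Lam src tgt sig x \<in> lcm_closure A Lam src tgt sig"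
| lcm: "a \<in> lcm_closure A Lam src tgt sig \<Longrightarrow> b \<in> lcm_closure A Lam src tgt sig \<Longrightarrow>
        is_right_lcm A Lam src tgt sig a b c \<Longrightarrow> c \<in> lcm_closure A Lam src tgt sig"

end

theory Submission
  imports Defs
begin

lemma ystep_iff:
  "(p, q) \<in> ystep A Lam src tgt sig \<longleftrightarrow>
   (\<exists>lam u x y v. p = (lam, u @ [x, y] @ v) \<and> q = (lam, u @ [fst (sig (x,y)), snd (sig (x,y))] @ v)
      \<and> is_path A Lam src tgt lam (u @ [x, y] @ v))"
  unfolding ystep_def paths_def by blast

lemma is_path_append:
  "is_path A Lam src tgt l (xs @ ys) \<longleftrightarrow>
   is_path A Lam src tgt l xs \<and> is_path A Lam src tgt (foldl (\<lambda>_ x. tgt x) l xs) ys"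
proof (induction xs arbitrary: l)
  case Nil
  then show ?case by (cases ys) auto
next
  case (Cons a xs)
  then show ?case by auto
qed

lemma ycong_sym:
  "(p, q) \<in> ycong A Lam src tgt sig \<Longrightarrow> (q, p) \<in> ycong A Lam src tgt sig"
proof -
  assume "(p, q) \<in> ycong A Lam src tgt sig"
  then have "(q, p) \<in> ((ystep A Lam src tgt sig \<union> (ystep A Lam src tgt sig)\<inverse>)\<^sup>*)\<inverse>"
    unfolding ycong_def by simp
  then have "(q, p) \<in> ((ystep A Lam src tgt sig \<union> (ystep A Lam src tgt sig)\<inverse>)\<inverse>)\<^sup>*"
    by (simp add: rtrancl_converse)
  moreover have "(ystep A Lam src tgt sig \<union> (ystep A Lam src tgt sig)\<inverse>)\<inverse>
     = ystep A Lam src tgt sig \<union> (ystep A Lam src tgt sig)\<inverse>" by auto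
  ultimately show ?thesis unfolding ycong_def by simp
qed

lemma ycong_inv:
  "(p, q) \<in> ycong A Lam src tgt sig \<Longrightarrow> fst p = fst q \<and> length (snd p) = length (snd q)"
  unfolding ycong_def
proof (induction rule: rtrancl_induct)
  case base
  then show ?case by simp
next
  case (step y z)
  then show ?case by (auto simp: ystep_iff)
qed

lemma class_inv:
  assumes "e \<in> struct_cat A Lam src tgt sig" "p \<in> e" "q \<in> e"
  shows "fst p = fst q \<and> length (snd p) = length (snd q)"
proof -
  obtain r where "e = ycong A Lam src tgt sig `` {r}"
    using assms(1) unfolding struct_cat_def quotient_def by blast
  then have "(r, p) \<in> ycong A Lam src tgt sig" "(r, q) \<in> ycong A Lam src tgt sig"
    using assms by auto
  then show ?thesis using ycong_inv by metis
qed

context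
  fixes A :: "'a set" and Lam :: "'v set" and src tgt :: "'a \<Rightarrow> 'v"
    and sig :: "'a \<times> 'a \<Rightarrow> 'a \<times> 'a"
  assumes Y: "qYB_map A Lam src tgt sig"
    and N: "nondegenerate A src tgt sig"
begin

lemma ystep_pres_path:
  assumes "(p, q) \<in> ystep A Lam src tgt sig" "p \<in> paths A Lam src tgt"
  shows "q \<in> paths A Lam src tgt"
proof -
  obtain lam u x y v where p: "p = (lam, u @ [x, y] @ v)"
    and q: "q = (lam, u @ [fst (sig (x,y)), snd (sig (x,y))] @ v)"
    and P: "is_path A Lam src tgt lam (u @ [x, y] @ v)"
    using assms(1) by (auto simp: ystep_iff)
  let ?l = "foldl (\<lambda>_ x. tgt x) lam u"
  have P1: "is_path A Lam src tgt lam u" and P2: "is_path A Lam src tgt ?l ([x, y] @ v)"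
    using P is_path_append by metis+
  have c: "composable A src tgt x y" and sx: "src x = ?l" and lL: "?l \<in> Lam"
    and P3: "is_path A Lam src tgt (tgt y) v"
    using P2 by (auto simp: composable_def)
  have c2: "composable A src tgt (fst (sig (x,y))) (snd (sig (x,y)))"
    and s2: "src (fst (sig (x,y))) = src x" and t2: "tgt (snd (sig (x,y))) = tgt y"
    using Y c unfolding qYB_map_def by blast+
  have "tgt (fst (sig (x,y))) \<in> Lam"
    using Y c2 unfolding qYB_map_def quiver_def composable_def by blast
  then have "is_path A Lam src tgt ?l ([fst (sig (x,y)), snd (sig (x,y))] @ v)"
    using c2 s2 t2 sx lL P3 by (auto simp: composable_def)
  then have "is_path A Lam src tgt lam (u @ [fst (sig (x,y)), snd (sig (x,y))] @ v)"
    using P1 is_path_append by metis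
  then show ?thesis using q by (simp add: paths_def)
qed

lemma ycong_path:
  assumes "(p, q) \<in> ycong A Lam src tgt sig" "q \<in> paths A Lam src tgt"
  shows "p \<in> paths A Lam src tgt"
proof -
  have "(q, p) \<in> ycong A Lam src tgt sig" using assms(1) ycong_sym by metis
  then show ?thesis using assms(2) unfolding ycong_def
  proof (induction rule: rtrancl_induct)
    case base
    then show ?case .
  next
    case (step y z)
    from step.hyps(2) show ?case
    proof
      assume "(y, z) \<in> ystep A Lam src tgt sig"
      then show ?thesis using ystep_pres_path step.IH step.prems by blast
    next
      assume "(y, z) \<in> (ystep A Lam src tgt sig)\<inverse>"
      then show ?thesis by (auto simp: ystep_iff paths_def)
    qed
  qed
qed

lemma ycong_cons:
  assumes "(p, q) \<in> ycong A Lam src tgt sig" "fst p = tgt y" "y \<in> A" "src y \<in> Lam"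
  shows "((src y, y # snd p), (src y, y # snd q)) \<in> ycong A Lam src tgt sig"
  using assms(1,2) unfolding ycong_def
proof (induction rule: rtrancl_induct)
  case base
  then show ?case by (simp add: ycong_def)
next
  case (step r z)
  have fr: "fst r = tgt y" using step.hyps(1) step.prems ycong_inv unfolding ycong_def by metis
  have "((src y, y # snd r), (src y, y # snd z)) \<in> ystep A Lam src tgt sig \<union> (ystep A Lam src tgt sig)\<inverse>"
    using step.hyps(2)
  proof
    assume "(r, z) \<in> ystep A Lam src tgt sig"
    then obtain lam u a b v where "r = (lam, u @ [a, b] @ v)"
      "z = (lam, u @ [fst (sig (a,b)), snd (sig (a,b))] @ v)"
      "is_path A Lam src tgt lam (u @ [a, b] @ v)" by (auto simp: ystep_iff)
    then have "((src y, y # snd r), (src y, y # snd z)) \<in> ystep A Lam src tgt sig"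
      using fr assms(3,4) unfolding ystep_iff
      by (intro exI[of _ "src y"] exI[of _ "y # u"] exI[of _ a] exI[of _ b] exI[of _ v]) auto
    then show ?thesis by blast
  next
    assume "(r, z) \<in> (ystep A Lam src tgt sig)\<inverse>"
    then obtain lam u a b v where "z = (lam, u @ [a, b] @ v)"
      "r = (lam, u @ [fst (sig (a,b)), snd (sig (a,b))] @ v)"
      "is_path A Lam src tgt lam (u @ [a, b] @ v)" by (auto simp: ystep_iff)
    then have "((src y, y # snd z), (src y, y # snd r)) \<in> ystep A Lam src tgt sig"
      using fr assms(3,4) unfolding ystep_iff
      by (intro exI[of _ "src y"] exI[of _ "y # u"] exI[of _ a] exI[of _ b] exI[of _ v]) auto
    then show ?thesis by blast
  qed
  then show ?case using step.IH step.prems unfolding ycong_def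
    by (meson rtrancl.rtrancl_into_rtrancl)
qed

lemma ext_lemma:
  "is_path A Lam src tgt l w \<Longrightarrow> z \<in> A \<Longrightarrow> src z = l \<Longrightarrow>
   \<exists>t. is_path A Lam src tgt l (w @ [t]) \<and>
     (\<forall>s. is_path A Lam src tgt l (w @ [t] @ s) \<longrightarrow>
        (\<exists>ys. ((l, z # ys), (l, w @ [t] @ s)) \<in> ycong A Lam src tgt sig))"
proof (induction w arbitrary: l z)
  case Nil
  have "tgt z \<in> Lam" using Y Nil unfolding qYB_map_def quiver_def by blast
  then have "is_path A Lam src tgt l ([] @ [z])" using Nil by simp
  moreover have "\<forall>s. is_path A Lam src tgt l ([] @ [z] @ s) \<longrightarrow>
        (\<exists>ys. ((l, z # ys), (l, [] @ [z] @ s)) \<in> ycong A Lam src tgt sig)"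
  proof (intro allI impI)
    fix s
    have "((l, z # s), (l, [] @ [z] @ s)) \<in> ycong A Lam src tgt sig"
      unfolding ycong_def by simp
    then show "\<exists>ys. ((l, z # ys), (l, [] @ [z] @ s)) \<in> ycong A Lam src tgt sig" by (rule exI)
  qed
  ultimately show ?case by (intro exI[of _ z] conjI)
next
  case (Cons y w')
  have yA: "y \<in> A" and sy: "src y = l" and lL: "l \<in> Lam" and pw: "is_path A Lam src tgt (tgt y) w'"
    using Cons.prems by auto
  have allb: "\<forall>x\<in>A. bij_betw (\<lambda>y'. fst (sig (x,y'))) (out_arrows A src (tgt x)) (out_arrows A src (src x))"
    using N unfolding nondegenerate_def by (rule conjunct1)
  have "bij_betw (\<lambda>y'. fst (sig (y,y'))) (out_arrows A src (tgt y)) (out_arrows A src (src y))"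
    using allb yA by (rule bspec)
  then have im: "(\<lambda>y'. fst (sig (y,y'))) ` out_arrows A src (tgt y) = out_arrows A src (src y)"
    by (rule bij_betw_imp_surj_on)
  have "z \<in> out_arrows A src (src y)" using Cons.prems sy by (simp add: out_arrows_def)
  then have "z \<in> (\<lambda>y'. fst (sig (y,y'))) ` out_arrows A src (tgt y)" using im by simp
  then obtain y' where y': "y' \<in> out_arrows A src (tgt y)" "z = fst (sig (y,y'))"
    by (rule imageE)
  have y'A: "y' \<in> A" "src y' = tgt y" using y'(1) by (auto simp: out_arrows_def)
  from Cons.IH[OF pw y'A] obtain t where tt: "is_path A Lam src tgt (tgt y) (w' @ [t]) \<and>
     (\<forall>s. is_path A Lam src tgt (tgt y) (w' @ [t] @ s) \<longrightarrow>
        (\<exists>ys. ((tgt y, y' # ys), (tgt y, w' @ [t] @ s)) \<in> ycong A Lam src tgt sig))"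
    by (rule exE)
  have t1: "is_path A Lam src tgt (tgt y) (w' @ [t])" using tt by (rule conjunct1)
  have t2: "\<forall>s. is_path A Lam src tgt (tgt y) (w' @ [t] @ s) \<longrightarrow>
        (\<exists>ys. ((tgt y, y' # ys), (tgt y, w' @ [t] @ s)) \<in> ycong A Lam src tgt sig)"
    using tt by (rule conjunct2)
  show ?case
  proof (intro exI[of _ t] conjI allI impI)
    show "is_path A Lam src tgt l ((y # w') @ [t])" using t1 yA sy lL by auto
  next
    fix s assume "is_path A Lam src tgt l ((y # w') @ [t] @ s)"
    then have ps: "is_path A Lam src tgt (tgt y) (w' @ [t] @ s)" by simp
    then obtain ys where ys: "((tgt y, y' # ys), (tgt y, w' @ [t] @ s)) \<in> ycong A Lam src tgt sig"
      using t2 by blast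
    have "(tgt y, y' # ys) \<in> paths A Lam src tgt"
      using ycong_path[OF ys] ps by (simp add: paths_def)
    then have py: "is_path A Lam src tgt l ([] @ [y, y'] @ ys)"
      using yA sy lL by (simp add: paths_def)
    have st: "((l, [] @ [y, y'] @ ys), (l, [] @ [fst (sig (y,y')), snd (sig (y,y'))] @ ys))
        \<in> ystep A Lam src tgt sig"
      unfolding ystep_iff using py by blast
    then have "((l, y # y' # ys), (l, z # snd (sig (y,y')) # ys)) \<in> ycong A Lam src tgt sig"
      using y'(2) unfolding ycong_def by (simp add: r_into_rtrancl)
    then have c1: "((l, z # snd (sig (y,y')) # ys), (l, y # y' # ys)) \<in> ycong A Lam src tgt sig"
      by (rule ycong_sym)
    have c2: "((l, y # y' # ys), (l, y # w' @ [t] @ s)) \<in> ycong A Lam src tgt sig"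
      using ycong_cons[OF ys _ yA] sy lL by simp
    show "\<exists>ys. ((l, z # ys), (l, (y # w') @ [t] @ s)) \<in> ycong A Lam src tgt sig"
    proof (rule exI[of _ "snd (sig (y,y')) # ys"])
      have "((l, z # snd (sig (y,y')) # ys), (l, y # w' @ [t] @ s)) \<in> ycong A Lam src tgt sig"
        using c1 c2 unfolding ycong_def by (rule rtrancl_trans)
      then show "((l, z # snd (sig (y,y')) # ys), (l, (y # w') @ [t] @ s)) \<in> ycong A Lam src tgt sig"
        by simp
    qed
  qed
qed

lemma list_lemma:
  "set L \<subseteq> out_arrows A src l \<Longrightarrow> l \<in> Lam \<Longrightarrow>
   \<exists>v. is_path A Lam src tgt l v \<and> length v \<le> length L \<and>
     (\<forall>s. is_path A Lam src tgt l (v @ s) \<longrightarrow>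
        (\<forall>x\<in>set L. \<exists>ys. ((l, x # ys), (l, v @ s)) \<in> ycong A Lam src tgt sig))"
proof (induction L)
  case Nil
  then show ?case by (intro exI[of _ "[]"]) auto
next
  case (Cons z L')
  then obtain v' where v1: "is_path A Lam src tgt l v'" and v2: "length v' \<le> length L'"
    and v3: "\<forall>s. is_path A Lam src tgt l (v' @ s) \<longrightarrow>
        (\<forall>x\<in>set L'. \<exists>ys. ((l, x # ys), (l, v' @ s)) \<in> ycong A Lam src tgt sig)" by auto
  have "z \<in> A" "src z = l" using Cons.prems by (auto simp: out_arrows_def)
  then obtain t where t1: "is_path A Lam src tgt l (v' @ [t])"
    and t2: "\<forall>s. is_path A Lam src tgt l (v' @ [t] @ s) \<longrightarrow>
        (\<exists>ys. ((l, z # ys), (l, v' @ [t] @ s)) \<in> ycong A Lam src tgt sig)"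
    using ext_lemma[OF v1] by blast
  have all: "\<forall>s. is_path A Lam src tgt l ((v' @ [t]) @ s) \<longrightarrow>
     (\<forall>x\<in>set (z # L'). \<exists>ys. ((l, x # ys), (l, (v' @ [t]) @ s)) \<in> ycong A Lam src tgt sig)"
  proof (intro allI impI ballI)
    fix s x assume ps: "is_path A Lam src tgt l ((v' @ [t]) @ s)" and x: "x \<in> set (z # L')"
    show "\<exists>ys. ((l, x # ys), (l, (v' @ [t]) @ s)) \<in> ycong A Lam src tgt sig"
    proof (cases "x = z")
      case True
      then show ?thesis using t2 ps by simp
    next
      case False
      then have "x \<in> set L'" using x by simp
      then show ?thesis using v3[rule_format, of "t # s" x] ps by simp
    qed
  qed
  have len: "length (v' @ [t]) \<le> length (z # L')" using v2 by simp
  have "is_path A Lam src tgt l (v' @ [t]) \<and> length (v' @ [t]) \<le> length (z # L') \<and>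
     (\<forall>s. is_path A Lam src tgt l ((v' @ [t]) @ s) \<longrightarrow>
     (\<forall>x\<in>set (z # L'). \<exists>ys. ((l, x # ys), (l, (v' @ [t]) @ s)) \<in> ycong A Lam src tgt sig))"
    using t1 len all by (intro conjI)
  then show ?case by (rule exI)
qed

end

lemma path_exists:
  assumes Y: "qYB_map A Lam src tgt sig" and N: "nondegenerate A src tgt sig"
  shows "l \<in> Lam \<Longrightarrow> out_arrows A src l \<noteq> {} \<Longrightarrow> \<exists>w. is_path A Lam src tgt l w \<and> length w = k"
proof (induction k arbitrary: l)
  case 0
  then show ?case by (intro exI[of _ "[]"]) auto
next
  case (Suc k)
  then obtain x where x: "x \<in> A" "src x = l" by (auto simp: out_arrows_def)
  have tL: "tgt x \<in> Lam" using Y x unfolding qYB_map_def quiver_def by blast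
  have "bij_betw (\<lambda>y'. fst (sig (x,y'))) (out_arrows A src (tgt x)) (out_arrows A src (src x))"
    using N x unfolding nondegenerate_def by blast
  moreover have "x \<in> out_arrows A src (src x)" using x by (simp add: out_arrows_def)
  ultimately have "out_arrows A src (tgt x) \<noteq> {}" unfolding bij_betw_def by auto
  then obtain w where "is_path A Lam src tgt (tgt x) w" "length w = k" using Suc.IH tL by blast
  then show ?case using x Suc.prems by (intro exI[of _ "x # w"]) auto
qed

theorem corollary5p13:
  fixes A :: "'a set" and Lam :: "'v set" and src tgt :: "'a \<Rightarrow> 'v"
    and sig :: "'a \<times> 'a \<Rightarrow> 'a \<times> 'a" and n :: nat
  assumes "qYB_map A Lam src tgt sig"
    and "involutive A src tgt sig"
    and "nondegenerate A src tgt sig"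
    and "A \<noteq> {}"
    and "\<forall>lam\<in>Lam. finite (out_arrows A src lam) \<and> card (out_arrows A src lam) \<le> n"
  shows "(\<forall>e\<in>lcm_closure A Lam src tgt sig. \<forall>p\<in>e. length (snd p) \<le> n)
         \<and> lcm_closure A Lam src tgt sig \<subset> struct_cat A Lam src tgt sig"
proof -
  note Y = assms(1) and N = assms(3)
  let ?yc = "ycong A Lam src tgt sig"
  let ?SC = "struct_cat A Lam src tgt sig"
  define good where "good l v \<longleftrightarrow> is_path A Lam src tgt l v \<and> length v \<le> n \<and>
     (\<forall>x\<in>out_arrows A src l. \<exists>ys. ((l, x # ys), (l, v)) \<in> ?yc)" for l v
  define V where "V l = (SOME v. good l v)" for l
  have ex: "\<exists>v. good l v" if "l \<in> Lam" for l
  proof -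
    have fin: "finite (out_arrows A src l)" and cn: "card (out_arrows A src l) \<le> n"
      using assms(5) that by auto
    obtain L where L: "set L = out_arrows A src l" "distinct L"
      using finite_distinct_list[OF fin] by blast
    have sub: "set L \<subseteq> out_arrows A src l" using L(1) by simp
    from list_lemma[OF Y N sub that] obtain v where vv: "is_path A Lam src tgt l v \<and> length v \<le> length L \<and>
      (\<forall>s. is_path A Lam src tgt l (v @ s) \<longrightarrow>
        (\<forall>x\<in>set L. \<exists>ys. ((l, x # ys), (l, v @ s)) \<in> ?yc))" by (rule exE)
    have v1: "is_path A Lam src tgt l v" using vv by (rule conjunct1)
    have v2: "length v \<le> length L" using vv by blast
    have v3: "\<forall>s. is_path A Lam src tgt l (v @ s) \<longrightarrow>
        (\<forall>x\<in>set L. \<exists>ys. ((l, x # ys), (l, v @ s)) \<in> ?yc)" using vv by (elim conjE)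
    have v4: "\<forall>x\<in>set L. \<exists>ys. ((l, x # ys), (l, v)) \<in> ?yc"
      using v3[rule_format, of "[]"] v1 by simp
    have "length L = card (out_arrows A src l)" using distinct_card[OF L(2)] L(1) by simp
    then have "length v \<le> n" using v2 cn by linarith
    then have "good l v" unfolding good_def using v1 v4 L(1) by blast
    then show ?thesis by blast
  qed
  have goodV: "good l (V l)" if "l \<in> Lam" for l
    using ex[OF that] unfolding V_def by (rule someI_ex)
  define D where "D l = ?yc `` {(l, V l)}" for l
  have DSC: "D l \<in> ?SC" if "l \<in> Lam" for l
    using goodV[OF that] unfolding D_def good_def struct_cat_def
    by (intro quotientI) (simp add: paths_def)
  have Dmem: "fst p = l \<and> length (snd p) \<le> n" if "l \<in> Lam" "p \<in> D l" for l p
  proof -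
    have "((l, V l), p) \<in> ?yc" using that(2) unfolding D_def by simp
    then show ?thesis using ycong_inv goodV[OF that(1)] unfolding good_def by fastforce
  qed
  define P where "P e \<longleftrightarrow> e \<in> ?SC \<and> (\<exists>l\<in>Lam. ldiv e (D l))" for e
  have fst_ldiv: "fst p = l" if h: "e \<in> ?SC" "l \<in> Lam" "ldiv e (D l)" "p \<in> e" for e l p
  proof -
    obtain m xs ys where "(m, xs) \<in> e" "(m, xs @ ys) \<in> D l" using h(3) unfolding ldiv_def by blast
    then show ?thesis using Dmem[OF h(2)] class_inv[OF h(1) _ h(4)] by fastforce
  qed
  have PE: "P e" if "e \<in> lcm_closure A Lam src tgt sig" for e
    using that
  proof (induction rule: lcm_closure.induct)
    case (gen x)
    have sL: "src x \<in> Lam" and tL: "tgt x \<in> Lam" using Y gen unfolding qYB_map_def quiver_def by auto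
    have g1: "gen_elem A Lam src tgt sig x \<in> ?SC"
      unfolding gen_elem_def struct_cat_def using gen sL tL
      by (intro quotientI) (simp add: paths_def)
    have "x \<in> out_arrows A src (src x)" using gen by (simp add: out_arrows_def)
    then obtain ys where "((src x, x # ys), (src x, V (src x))) \<in> ?yc"
      using goodV[OF sL] unfolding good_def by blast
    then have "(src x, [x] @ ys) \<in> D (src x)" unfolding D_def using ycong_sym by fastforce
    moreover have "(src x, [x]) \<in> gen_elem A Lam src tgt sig x"
      unfolding gen_elem_def ycong_def by simp
    ultimately have "ldiv (gen_elem A Lam src tgt sig x) (D (src x))" unfolding ldiv_def by blast
    then show ?case unfolding P_def using g1 sL by blast
  next
    case (lcm a b c)
    obtain l1 where l1: "l1 \<in> Lam" "ldiv a (D l1)" and aSC: "a \<in> ?SC" using lcm.IH(1) unfolding P_def by blast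
    obtain l2 where l2: "l2 \<in> Lam" "ldiv b (D l2)" and bSC: "b \<in> ?SC" using lcm.IH(2) unfolding P_def by blast
    have cSC: "c \<in> ?SC" and ac: "ldiv a c" and bc: "ldiv b c"
      and univ: "\<forall>d\<in>?SC. ldiv a d \<and> ldiv b d \<longrightarrow> ldiv c d"
      using lcm.hyps(3) unfolding is_right_lcm_def by auto
    obtain m xs ys where m: "(m, xs) \<in> a" "(m, xs @ ys) \<in> c" using ac unfolding ldiv_def by blast
    obtain m2 zs ws where m2: "(m2, zs) \<in> b" "(m2, zs @ ws) \<in> c" using bc unfolding ldiv_def by blast
    have "m = l1" using fst_ldiv[OF aSC l1 m(1)] by simp
    moreover have "m2 = l2" using fst_ldiv[OF bSC l2 m2(1)] by simp
    moreover have "m = m2" using class_inv[OF cSC m(2) m2(2)] by simp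
    ultimately have "l1 = l2" by simp
    then have "ldiv c (D l1)" using univ DSC[OF l1(1)] l1 l2 by blast
    then show ?case unfolding P_def using cSC l1 by blast
  qed
  have part1: "\<forall>e\<in>lcm_closure A Lam src tgt sig. \<forall>p\<in>e. length (snd p) \<le> n"
  proof (intro ballI)
    fix e p assume e: "e \<in> lcm_closure A Lam src tgt sig" and p: "p \<in> e"
    obtain l where l: "l \<in> Lam" "ldiv e (D l)" and eSC: "e \<in> ?SC" using PE[OF e] unfolding P_def by blast
    obtain m xs ys where m: "(m, xs) \<in> e" "(m, xs @ ys) \<in> D l" using l(2) unfolding ldiv_def by blast
    have "length xs \<le> n" using Dmem[OF l(1) m(2)] by simp
    then show "length (snd p) \<le> n" using class_inv[OF eSC m(1) p] by simp
  qed
  have sub: "lcm_closure A Lam src tgt sig \<subseteq> ?SC" using PE unfolding P_def by blast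
  obtain x where x: "x \<in> A" using assms(4) by blast
  have sL: "src x \<in> Lam" using Y x unfolding qYB_map_def quiver_def by auto
  have "out_arrows A src (src x) \<noteq> {}" using x by (auto simp: out_arrows_def)
  then obtain w where w: "is_path A Lam src tgt (src x) w" "length w = Suc n"
    using path_exists[OF Y N sL] by blast
  let ?e = "?yc `` {(src x, w)}"
  have eSC: "?e \<in> ?SC" unfolding struct_cat_def using w by (intro quotientI) (simp add: paths_def)
  have we: "(src x, w) \<in> ?e" unfolding ycong_def by simp
  have notin: "?e \<notin> lcm_closure A Lam src tgt sig"
  proof
    assume "?e \<in> lcm_closure A Lam src tgt sig"
    then have "length (snd (src x, w)) \<le> n" using part1 we by blast
    then show False using w(2) by simp
  qed
  have "lcm_closure A Lam src tgt sig \<noteq> ?SC" using notin eSC by blast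
  then have "lcm_closure A Lam src tgt sig \<subset> ?SC" using sub by (simp add: psubset_eq)
  with part1 show ?thesis by (rule conjI)
qed

end
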